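(* For either choice $\zeta\in\{q,-q^3\}$, the functions $\mathcal{F}(\lambda_1,\dots,\lambda_{L-1}\mid v_1,v_2)=\langle\bar0|\mathcal{E}(\lambda_{L-1})\cdots\mathcal{E}(\lambda_1)\mathcal{B}(v_2)\mathcal{B}(v_1)|0\rangle$ and $\bar{\mathcal{F}}(v_1,v_2\mid\lambda_1,\dots,\lambda_{L-1})=\langle\bar0|\mathcal{B}(v_2)\mathcal{B}(v_1)\mathcal{E}(\lambda_{L-1})\cdots\mathcal{E}(\lambda_1)|0\rangle$ are polynomials of degree $2L-1$ in each variable $x_i=e^{2\lambda_i}$ ($1\le i\le L-1$) separately, and also of degree $2L-1$ in each variable $y_1=e^{2v_1}$ and $y_2=e^{2v_2}$.
   Context: Let $q\in\mathbb{C}\setminus\{0\}$ (with a fixed choice of $q^{1/2}$) and $\zeta\in\{q,-q^3\}$ ($\zeta=q$: Fateev–Zamolodchikov model; $\zeta=-q^3$: Izergin–Korepin model). For $\lambda\in\mathbb{C}$ put $x=e^{2\lambda}$ and define $a(\lambda)=(x-\zeta)(x-q^2)$, $b(\lambda)=q(x-1)(x-\zeta)$, $c(\lambda)=(1-q^2)(x-\zeta)$, $\bar c(\lambda)=x(1-q^2)(x-\zeta)$, and for $\alpha,\beta\in\{1,2,3\}$, with $\beta'=4-\beta$: $d_{\alpha,\beta}(\lambda)=q(x-1)(x-\zeta)+x(q^2-1)(\zeta-1)$ if $\alpha=\beta=2$; $d_{\alpha,\beta}(\lambda)=(x-1)[(x-\zeta)+x(q^2-1)]$ if $\alpha=\beta\neq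 2$; $d_{\alpha,\beta}(\lambda)=(q^2-1)[\zeta(x-1)q^{(\alpha-\beta)/2}-\delta_{\alpha,\beta'}(x-\zeta)]$ if $\alpha<\beta$; $d_{\alpha,\beta}(\lambda)=x(q^2-1)[(x-1)q^{(\alpha-\beta)/2}-\delta_{\alpha,\beta'}(x-\zeta)]$ if $\alpha>\beta$. Let $e_1,e_2,e_3$ be the standard basis of $\mathbb{C}^3$ and $E_{\alpha,\beta}$ the unit matrices. Define $\mathcal{R}(\lambda)\in\mathrm{End}(\mathbb{C}^3\otimes\mathbb{C}^3)$ as the $9\times 9$ matrix in the ordered basis $e_1\otimes e_1,e_1\otimes e_2,e_1\otimes e_3,e_2\otimes e_1,e_2\otimes e_2,e_2\otimes e_3,e_3\otimes e_1,e_3\otimes e_2,e_3\otimes e_3$ (indices $1,\dots,9$) whose only nonzero entries (row, column) are: $(1,1)=a$; $(2,2)=b$, $(2,4)=c$; $(3,3)=d_{1,1}$, $(3,5)=d_{1,2}$, $(3,7)=d_{1,3}$; $(4,2)=\bar c$, $(4,4)=b$; $(5,3)=d_{2,1}$, $(5,5)=d_{2,2}$, $(5,7)=d_{2,3}$; $(6,6)=b$, $(6,8)=c$; $(7,3)=d_{3,1}$, $(7,5)=d_{3,2}$, $(7,7)=d_{3,3}$; $(8,6)=\bar c$, $(8,8)=b$; $(9,9)=a$ (all evaluated at $\lambda$). Fix $L\ge1$ and inhomogeneities $\mu_1,\dots,\mu_L\in\mathbb{C}$. With $V_a=V_1=\dots=V_L=\mathbb{C}^3$, let $\mathcal{T}(\lambda)=\mathcal{R}_{a1}(\lambda-\mu_1)\cdots\mathcal{R}_{aL}(\lambda-\mu_L)\in\mathrm{End}(V_a\otimes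 V_1\otimes\cdots\otimes V_L)$, where $\mathcal{R}_{aj}$ acts as $\mathcal{R}$ on $V_a\otimes V_j$. Write $\mathcal{T}(\lambda)=\sum_{\alpha,\beta}E_{\alpha,\beta}\otimes\mathcal{T}_\alpha^\beta(\lambda)$ and set $\mathcal{B}(\lambda)=\mathcal{T}_1^2(\lambda)$, $\mathcal{E}(\lambda)=\mathcal{T}_1^3(\lambda)$, operators on $V_1\otimes\cdots\otimes V_L$. Let $|0\rangle=e_1^{\otimes L}$ and let $\langle\bar0|$ be the dual vector of $e_3^{\otimes L}$. *)

theory Defs
  imports "HOL-Computational_Algebra.Polynomial" Complex_Main
begin

text \<open>Parameters: q (nonzero), qh a fixed square root of q (so q^((a-b)/2) = qh powi (a-b)),
  and zeta.  Spectral variable lam, x = exp(2 lam).\<close>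

definition dent :: "complex \<Rightarrow> complex \<Rightarrow> complex \<Rightarrow> complex \<Rightarrow> nat \<Rightarrow> nat \<Rightarrow> complex" where
  "dent q qh z lam a b =
    (let x = exp (2 * lam); dl = (if a = 4 - b then 1 else 0) in
     if a = 2 \<and> b = 2 then q * (x - 1) * (x - z) + x * (q^2 - 1) * (z - 1)
     else if a = b then (x - 1) * ((x - z) + x * (q^2 - 1))
     else if a < b then (q^2 - 1) * (z * (x - 1) * qh powi (int a - int b) - dl * (x - z))
     else x * (q^2 - 1) * ((x - 1) * qh powi (int a - int b) - dl * (x - z)))"

text \<open>The 9x9 R-matrix: entry (r,c), with r,c in 1..9 (basis e_a (x) e_i has index 3(a-1)+i).\<close>
definition Rmat :: "complex \<Rightarrow> complex \<Rightarrow> complex \<Rightarrow> complex \<Rightarrow> nat \<Rightarrow> nat \<Rightarrow> complex" where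
  "Rmat q qh z lam r c =
    (let x = exp (2 * lam);
         A = (x - z) * (x - q^2);
         B = q * (x - 1) * (x - z);
         C = (1 - q^2) * (x - z);
         Cb = x * (1 - q^2) * (x - z);
         d = dent q qh z lam in
     if (r, c) = (1, 1) then A
     else if (r, c) = (2, 2) then B
     else if (r, c) = (2, 4) then C
     else if (r, c) = (3, 3) then d 1 1
     else if (r, c) = (3, 5) then d 1 2
     else if (r, c) = (3, 7) then d 1 3
     else if (r, c) = (4, 2) then Cb
     else if (r, c) = (4, 4) then B
     else if (r, c) = (5, 3) then d 2 1
     else if (r, c) = (5, 5) then d 2 2
     else if (r, c) = (5, 7) then d 2 3
     else if (r, c) = (6, 6) then B
     else if (r, c) = (6, 8) then C
     else if (r, c) = (7, 3) then d 3 1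
     else if (r, c) = (7, 5) then d 3 2
     else if (r, c) = (7, 7) then d 3 3
     else if (r, c) = (8, 6) then Cb
     else if (r, c) = (8, 8) then B
     else if (r, c) = (9, 9) then A
     else 0)"

definition Rent :: "complex \<Rightarrow> complex \<Rightarrow> complex \<Rightarrow> complex \<Rightarrow> nat \<Rightarrow> nat \<Rightarrow> nat \<Rightarrow> nat \<Rightarrow> complex" where
  "Rent q qh z lam a i b j = Rmat q qh z lam (3 * (a - 1) + i) (3 * (b - 1) + j)"

text \<open>Matrix elements of the monodromy entry T_a^b(lam) on V_1 (x) ... (x) V_L, with
  inhomogeneities given as the list mus = [mu_1,...,mu_L]; quantum-space basis vectors are
  lists [i_1,...,i_L] with entries in {1,2,3}.
  T(lam) = R_{a1}(lam - mu_1) ... R_{aL}(lam - mu_L).\<close>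
fun Tent :: "complex \<Rightarrow> complex \<Rightarrow> complex \<Rightarrow> complex list \<Rightarrow> complex \<Rightarrow> nat \<Rightarrow> nat \<Rightarrow> nat list \<Rightarrow> nat list \<Rightarrow> complex" where
  "Tent q qh z [] lam a b [] [] = (if a = b then 1 else 0)"
| "Tent q qh z (m # ms) lam a b (i # is) (j # js) =
     (\<Sum>g\<in>{1,2,3::nat}. Rent q qh z (lam - m) a i g j * Tent q qh z ms lam g b is js)"
| "Tent q qh z _ lam a b _ _ = 0"

definition basis :: "nat \<Rightarrow> nat list set" where
  "basis L = {xs. length xs = L \<and> set xs \<subseteq> {1,2,3}}"

definition Tapp :: "complex \<Rightarrow> complex \<Rightarrow> complex \<Rightarrow> complex list \<Rightarrow> nat \<Rightarrow> nat \<Rightarrow> complex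
    \<Rightarrow> (nat list \<Rightarrow> complex) \<Rightarrow> (nat list \<Rightarrow> complex)" where
  "Tapp q qh z mus a b lam v =
     (\<lambda>is. \<Sum>js\<in>basis (length mus). Tent q qh z mus lam a b is js * v js)"

definition vac :: "nat \<Rightarrow> nat list \<Rightarrow> complex" where
  "vac L = (\<lambda>is. if is = replicate L 1 then 1 else 0)"

fun Eseq :: "complex \<Rightarrow> complex \<Rightarrow> complex \<Rightarrow> complex list \<Rightarrow> complex list
    \<Rightarrow> (nat list \<Rightarrow> complex) \<Rightarrow> (nat list \<Rightarrow> complex)" where
  "Eseq q qh z mus [] v = v"
| "Eseq q qh z mus (l # ls) v = Eseq q qh z mus ls (Tapp q qh z mus 1 3 l v)"

text \<open>F = <0bar| E(lam_{L-1}) ... E(lam_1) B(v2) B(v1) |0>, with lam :: nat => complex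
  indexed 1..L-1 and mu indexed 1..L.\<close>
definition Fpf :: "complex \<Rightarrow> complex \<Rightarrow> complex \<Rightarrow> nat \<Rightarrow> (nat \<Rightarrow> complex) \<Rightarrow> (nat \<Rightarrow> complex)
    \<Rightarrow> complex \<Rightarrow> complex \<Rightarrow> complex" where
  "Fpf q qh z L mu lam v1 v2 =
    (let mus = map mu [1..<L+1] in
     Eseq q qh z mus (map lam [1..<L])
       (Tapp q qh z mus 1 2 v2 (Tapp q qh z mus 1 2 v1 (vac L))) (replicate L 3))"

text \<open>Fbar = <0bar| B(v2) B(v1) E(lam_{L-1}) ... E(lam_1) |0>.\<close>
definition Fbar :: "complex \<Rightarrow> complex \<Rightarrow> complex \<Rightarrow> nat \<Rightarrow> (nat \<Rightarrow> complex) \<Rightarrow> (nat \<Rightarrow> complex)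
    \<Rightarrow> complex \<Rightarrow> complex \<Rightarrow> complex" where
  "Fbar q qh z L mu lam v1 v2 =
    (let mus = map mu [1..<L+1] in
     Tapp q qh z mus 1 2 v2 (Tapp q qh z mus 1 2 v1
       (Eseq q qh z mus (map lam [1..<L]) (vac L))) (replicate L 3))"

definition poly_in_x :: "nat \<Rightarrow> (complex \<Rightarrow> complex) \<Rightarrow> bool" where
  "poly_in_x d f \<longleftrightarrow> (\<exists>p::complex poly. degree p \<le> d \<and> (\<forall>l. f l = poly p (exp (2 * l))))"

end

theory Submission
  imports Defs
begin

abbreviation PX where "PX \<equiv> poly_in_x"

lemma PX_le: "PX d f \<Longrightarrow> d \<le> k \<Longrightarrow> PX k f"
  unfolding poly_in_x_def by (meson order_trans)

lemma PX_const: "PX 0 (\<lambda>l. c)"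
  unfolding poly_in_x_def by (rule exI[of _ "[:c:]"]) simp

lemma PX_X: "PX 1 (\<lambda>l. exp (2 * l))"
  unfolding poly_in_x_def by (rule exI[of _ "[:0, 1:]"]) simp

lemma PX_add: "PX d f \<Longrightarrow> PX e g \<Longrightarrow> PX (max d e) (\<lambda>l. f l + g l)"
  unfolding poly_in_x_def
  apply (elim exE conjE)
  subgoal for p p' by (rule exI[of _ "p + p'"]) (auto intro!: degree_add_le simp: le_max_iff_disj)
  done

lemma PX_diff: "PX d f \<Longrightarrow> PX e g \<Longrightarrow> PX (max d e) (\<lambda>l. f l - g l)"
  unfolding poly_in_x_def
  apply (elim exE conjE)
  subgoal for p p' by (rule exI[of _ "p - p'"]) (auto intro!: degree_diff_le simp: le_max_iff_disj)
  done

lemma PX_uminus: "PX d f \<Longrightarrow> PX d (\<lambda>l. - f l)"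
  unfolding poly_in_x_def
  apply (elim exE conjE)
  subgoal for p by (rule exI[of _ "- p"]) auto
  done

lemma PX_mult: "PX d f \<Longrightarrow> PX e g \<Longrightarrow> PX (d + e) (\<lambda>l. f l * g l)"
  unfolding poly_in_x_def
  apply (elim exE conjE)
  subgoal for p p' by (rule exI[of _ "p * p'"]) (auto intro: order_trans[OF degree_mult_le] add_mono)
  done

lemma PX_sum: "finite S \<Longrightarrow> (\<And>s. s \<in> S \<Longrightarrow> PX d (f s)) \<Longrightarrow> PX d (\<lambda>l. \<Sum>s\<in>S. f s l)"
proof (induction S rule: finite_induct)
  case empty
  then show ?case using PX_le[OF PX_const[of 0]] by simp
next
  case (insert x F)
  have "PX (max d d) (\<lambda>l. f x l + (\<Sum>s\<in>F. f s l))"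
    by (rule PX_add) (use insert in auto)
  then show ?case using insert by simp
qed

lemma PX_shift: "PX d f \<Longrightarrow> PX d (\<lambda>l. f (l - m))"
  unfolding poly_in_x_def
proof (elim exE conjE)
  fix p assume p: "degree p \<le> d" "\<forall>l. f l = poly p (exp (2 * l))"
  show "\<exists>p. degree p \<le> d \<and> (\<forall>l. f (l - m) = poly p (exp (2 * l)))"
  proof (intro exI conjI allI)
    show "degree (p \<circ>\<^sub>p [:0, inverse (exp (2*m)):]) \<le> d"
      using p(1) by (simp add: degree_pcompose)
    fix l
    have "exp (2 * (l - m)) = inverse (exp (2*m)) * exp (2 * l)"
      by (simp add: right_diff_distrib exp_diff field_simps)
    then show "f (l - m) = poly (p \<circ>\<^sub>p [:0, inverse (exp (2*m)):]) (exp (2 * l))"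
      using p(2) by (simp add: poly_pcompose mult.commute)
  qed
qed

lemmas PX_rules = PX_const PX_X PX_add PX_diff PX_uminus PX_mult

lemma Rent_poly:
  assumes "a \<in> {1,2,3}" "i \<in> {1,2,3}" "g \<in> {1,2,3}" "j \<in> {1,2,3}"
  shows "PX (if a < g then 1 else 2) (\<lambda>l. Rent q qh z l a i g j)"
  using assms
  apply (simp only: insert_iff empty_iff simp_thms)
  apply (elim disjE)
  apply (simp_all add: Rent_def Rmat_def dent_def Let_def)
  apply (rule PX_le, (rule PX_rules)+, simp)+
  done

lemma PX_zero: "PX d (\<lambda>l. 0)"
  by (rule PX_le[OF PX_const]) simp

lemma Rent_poly_shift:
  assumes "a \<in> {1,2,3}" "i \<in> {1,2,3}" "g \<in> {1,2,3}" "j \<in> {1,2,3}"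
  shows "PX (if a < g then 1 else 2) (\<lambda>l. Rent q qh z (l - m) a i g j)"
  using PX_shift[OF Rent_poly[OF assms]] .

lemma Tent_poly:
  "\<forall>is js a b. set is \<subseteq> {1,2,3} \<longrightarrow> set js \<subseteq> {1,2,3} \<longrightarrow> a \<in> {1,2,3} \<longrightarrow> b \<in> {1,2,3} \<longrightarrow>
     PX (2 * length ms) (\<lambda>l. Tent q qh z ms l a b is js) \<and>
     (a < b \<longrightarrow> PX (2 * length ms - 1) (\<lambda>l. Tent q qh z ms l a b is js))"
proof (induction ms)
  case Nil
  show ?case
  proof (intro allI impI)
    fix "is" js :: "nat list" and a b :: nat
    have "PX 0 (\<lambda>l. Tent q qh z [] l a b is js)"
      by (cases "is"; cases js) (simp_all add: PX_const)
    then show "PX (2 * length []) (\<lambda>l. Tent q qh z [] l a b is js) \<and>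
       (a < b \<longrightarrow> PX (2 * length [] - 1) (\<lambda>l. Tent q qh z [] l a b is js))" by simp
  qed
next
  case (Cons m ms)
  show ?case
  proof (intro allI impI)
    fix "is" js :: "nat list" and a b :: nat
    assume is3: "set is \<subseteq> {1,2,3}" and js3: "set js \<subseteq> {1,2,3}" and a3: "a \<in> {1,2,3}" and b3: "b \<in> {1,2,3}"
    show "PX (2 * length (m # ms)) (\<lambda>l. Tent q qh z (m # ms) l a b is js) \<and>
       (a < b \<longrightarrow> PX (2 * length (m # ms) - 1) (\<lambda>l. Tent q qh z (m # ms) l a b is js))"
    proof (cases "is = [] \<or> js = []")
      case True
      then have "Tent q qh z (m # ms) l a b is js = 0" for l
        by (cases "is"; cases js) auto
      then show ?thesis by (simp add: PX_zero)
    next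
      case False
      then obtain i is' j js' where e: "is = i # is'" "js = j # js'"
        by (cases "is"; cases js) auto
      have i3: "i \<in> {1,2,3}" and is3': "set is' \<subseteq> {1,2,3}" using is3 e by auto
      have j3: "j \<in> {1,2,3}" and js3': "set js' \<subseteq> {1,2,3}" using js3 e by auto
      have T: "Tent q qh z (m # ms) l a b is js =
        (\<Sum>g\<in>{1,2,3::nat}. Rent q qh z (l - m) a i g j * Tent q qh z ms l g b is' js')" for l
        using e by simp
      have P1: "PX (2 * length (m # ms)) (\<lambda>l. Tent q qh z (m # ms) l a b is js)"
        unfolding T
      proof (rule PX_sum)
        fix g :: nat assume g3: "g \<in> {1,2,3}"
        have "PX (2 + 2 * length ms) (\<lambda>l. Rent q qh z (l - m) a i g j * Tent q qh z ms l g b is' js')"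
          apply (rule PX_mult)
           apply (rule PX_le[OF Rent_poly_shift[OF a3 i3 g3 j3]], simp)
          using Cons.IH is3' js3' g3 b3 by blast
        then show "PX (2 * length (m # ms)) (\<lambda>l. Rent q qh z (l - m) a i g j * Tent q qh z ms l g b is' js')"
          by simp
      qed simp
      have P2: "PX (2 * length (m # ms) - 1) (\<lambda>l. Tent q qh z (m # ms) l a b is js)" if ab: "a < b"
        unfolding T
      proof (rule PX_sum)
        fix g :: nat assume g3: "g \<in> {1,2,3}"
        show "PX (2 * length (m # ms) - 1) (\<lambda>l. Rent q qh z (l - m) a i g j * Tent q qh z ms l g b is' js')"
        proof (cases "a < g")
          case True
          have "PX (1 + 2 * length ms) (\<lambda>l. Rent q qh z (l - m) a i g j * Tent q qh z ms l g b is' js')"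
            apply (rule PX_mult)
             using Rent_poly_shift[OF a3 i3 g3 j3] True apply simp
            using Cons.IH is3' js3' g3 b3 by blast
          then show ?thesis by simp
        next
          case False
          then have gb: "g < b" using ab by simp
          show ?thesis
          proof (cases "ms = []")
            case True
            then have "Tent q qh z ms l g b is' js' = 0" for l
              using gb by (cases is'; cases js') auto
            then show ?thesis by (simp add: PX_zero)
          next
            case False
            have "PX (2 + (2 * length ms - 1)) (\<lambda>l. Rent q qh z (l - m) a i g j * Tent q qh z ms l g b is' js')"
              apply (rule PX_mult)
               apply (rule PX_le[OF Rent_poly_shift[OF a3 i3 g3 j3]], simp)
              using Cons.IH is3' js3' g3 b3 gb by blast
            then show ?thesis using False by simp
          qed
        qed
      qed simp
      show ?thesis using P1 P2 by blast
    qed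
  qed
qed

lemma basis_finite: "finite (basis n)"
proof -
  have "basis n = {xs. set xs \<subseteq> {1,2,3} \<and> length xs = n}" unfolding basis_def by auto
  then show ?thesis using finite_lists_length_eq[of "{1,2,3::nat}" n] by simp
qed

lemma basis_set: "xs \<in> basis n \<Longrightarrow> set xs \<subseteq> {1,2,3}"
  unfolding basis_def by auto

lemma Tapp_var:
  assumes "b \<in> {1,2,3}" "1 < b" "is \<in> basis (length mus)"
  shows "PX (2 * length mus - 1) (\<lambda>l. Tapp q qh z mus 1 b l v is)"
  unfolding Tapp_def
proof (rule PX_sum[OF basis_finite])
  fix js assume js: "js \<in> basis (length mus)"
  have "PX (2 * length mus - 1 + 0) (\<lambda>l. Tent q qh z mus l 1 b is js * v js)"
    apply (rule PX_mult[OF _ PX_const])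
    using Tent_poly[where ms = mus] basis_set[OF js] basis_set[OF assms(3)] assms(1,2) by blast
  then show "PX (2 * length mus - 1) (\<lambda>l. Tent q qh z mus l 1 b is js * v js)" by simp
qed

lemma Tapp_const:
  assumes "\<forall>js\<in>basis (length mus). PX d (\<lambda>l. v l js)"
  shows "PX d (\<lambda>l. Tapp q qh z mus a b lam0 (v l) is)"
  unfolding Tapp_def
proof (rule PX_sum[OF basis_finite])
  fix js assume js: "js \<in> basis (length mus)"
  have "PX (0 + d) (\<lambda>l. Tent q qh z mus lam0 a b is js * v l js)"
    by (rule PX_mult[OF PX_const]) (use assms js in blast)
  then show "PX d (\<lambda>l. Tent q qh z mus lam0 a b is js * v l js)" by simp
qed

lemma Eseq_const:
  "\<forall>js\<in>basis (length mus). PX d (\<lambda>l. v l js) \<Longrightarrow>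
   \<forall>is\<in>basis (length mus). PX d (\<lambda>l. Eseq q qh z mus ls (v l) is)"
proof (induction ls arbitrary: v)
  case Nil
  then show ?case by simp
next
  case (Cons a ls)
  have "\<forall>js\<in>basis (length mus). PX d (\<lambda>l. Tapp q qh z mus 1 3 a (v l) js)"
    using Tapp_const[OF Cons.prems] by blast
  from Cons.IH[OF this] show ?case by simp
qed

lemma Eseq_var:
  "distinct ks \<Longrightarrow>
   \<forall>is\<in>basis (length mus). PX (2 * length mus - 1) (\<lambda>l. Eseq q qh z mus (map (lam(i := l)) ks) v is)"
proof (induction ks arbitrary: v)
  case Nil
  then show ?case by (simp add: PX_le[OF PX_const])
next
  case (Cons k ks)
  show ?case
  proof (cases "k = i")
    case True
    then have m: "map (lam(i := l)) ks = map lam ks" for l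
      using Cons.prems by auto
    have "\<forall>js\<in>basis (length mus). PX (2 * length mus - 1) (\<lambda>l. Tapp q qh z mus 1 3 l v js)"
      using Tapp_var by simp
    from Eseq_const[OF this, where ls = "map lam ks" and q=q and qh=qh and z=z]
    have "\<forall>is\<in>basis (length mus). PX (2 * length mus - 1)
       (\<lambda>l. Eseq q qh z mus (map (lam(i := l)) ks) (Tapp q qh z mus 1 3 l v) is)"
      unfolding m .
    then show ?thesis using True by (simp del: fun_upd_apply add: fun_upd_same)
  next
    case False
    from Cons.IH[of "Tapp q qh z mus 1 3 (lam k) v"] Cons.prems False show ?thesis by simp
  qed
qed

theorem lemma2p2:
  fixes q qh z :: complex and L :: nat and mu :: "nat \<Rightarrow> complex"
  assumes "q \<noteq> 0" and "qh ^ 2 = q" and "z = q \<or> z = - (q ^ 3)" and "L \<ge> 1"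
  shows "(\<forall>i\<in>{1..L-1}. \<forall>lam v1 v2.
            poly_in_x (2*L-1) (\<lambda>l. Fpf q qh z L mu (lam(i := l)) v1 v2) \<and>
            poly_in_x (2*L-1) (\<lambda>l. Fbar q qh z L mu (lam(i := l)) v1 v2))
       \<and> (\<forall>lam v2. poly_in_x (2*L-1) (\<lambda>l. Fpf q qh z L mu lam l v2) \<and>
                   poly_in_x (2*L-1) (\<lambda>l. Fbar q qh z L mu lam l v2))
       \<and> (\<forall>lam v1. poly_in_x (2*L-1) (\<lambda>l. Fpf q qh z L mu lam v1 l) \<and>
                   poly_in_x (2*L-1) (\<lambda>l. Fbar q qh z L mu lam v1 l))"
proof -
  define mus where "mus = map mu [1..<L+1]"
  have len: "length mus = L" unfolding mus_def by simp
  have r3: "replicate L 3 \<in> basis (length mus)" unfolding len basis_def by auto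
  have d: "distinct [1..<L]" by simp
  have A: "PX (2*L-1) (\<lambda>l. Fpf q qh z L mu (lam(i := l)) v1 v2) \<and>
           PX (2*L-1) (\<lambda>l. Fbar q qh z L mu (lam(i := l)) v1 v2)" for i lam v1 v2
  proof
    show "PX (2*L-1) (\<lambda>l. Fpf q qh z L mu (lam(i := l)) v1 v2)"
      unfolding Fpf_def Let_def mus_def[symmetric]
      using Eseq_var[OF d, where q=q and qh=qh and z=z and mus=mus and lam=lam and i=i] r3 len
      by (simp del: fun_upd_apply)
    show "PX (2*L-1) (\<lambda>l. Fbar q qh z L mu (lam(i := l)) v1 v2)"
      unfolding Fbar_def Let_def mus_def[symmetric]
      by (rule Tapp_const, rule ballI, rule Tapp_const)
        (use Eseq_var[OF d, where q=q and qh=qh and z=z and mus=mus and lam=lam and i=i] len in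
          \<open>simp del: fun_upd_apply\<close>)
  qed
  have B: "PX (2*L-1) (\<lambda>l. Fpf q qh z L mu lam l v2) \<and> PX (2*L-1) (\<lambda>l. Fbar q qh z L mu lam l v2)"
    for lam v2
  proof
    show "PX (2*L-1) (\<lambda>l. Fpf q qh z L mu lam l v2)"
      unfolding Fpf_def Let_def mus_def[symmetric]
      apply (rule Eseq_const[rule_format, OF _ r3])
      apply (rule Tapp_const)
      using Tapp_var len by auto
    show "PX (2*L-1) (\<lambda>l. Fbar q qh z L mu lam l v2)"
      unfolding Fbar_def Let_def mus_def[symmetric]
      apply (rule Tapp_const)
      using Tapp_var len by auto
  qed
  have C: "PX (2*L-1) (\<lambda>l. Fpf q qh z L mu lam v1 l) \<and> PX (2*L-1) (\<lambda>l. Fbar q qh z L mu lam v1 l)"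
    for lam v1
  proof
    show "PX (2*L-1) (\<lambda>l. Fpf q qh z L mu lam v1 l)"
      unfolding Fpf_def Let_def mus_def[symmetric]
      apply (rule Eseq_const[rule_format, OF _ r3])
      using Tapp_var len by auto
    show "PX (2*L-1) (\<lambda>l. Fbar q qh z L mu lam v1 l)"
      unfolding Fbar_def Let_def mus_def[symmetric]
      using Tapp_var r3 len by auto
  qed
  show ?thesis using A B C by blast
qed

end
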